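(* Let $f=c_0x_0^3+c_1x_1^3+c_2x_2^3+c_3x_3^3+c_4x_4^3$ with $x_4:=-x_0-x_1-x_2-x_3$, where exactly one of $c_0,\dots,c_4$ is zero and the other four are nonzero. Then $H(f)$ is a well-defined projective $3$-plane and $H(f)\cap X_2$ consists of $6$ lines (in particular it is not finite, so $f$ lies on the Hessian discriminant).
   Context: $\mathbb{P}^9$ denotes the projective space of quadratic forms in $x_0,\dots,x_3$; $X_2\subset\mathbb{P}^9$ is the variety of quadratic forms of rank $\le2$. For a cubic form $f$ in $x_0,\dots,x_3$ whose four partial derivatives are linearly independent, $H(f)\subset\mathbb{P}^9$ is the projective $3$-plane spanned by $\partial f/\partial x_0,\dots,\partial f/\partial x_3$. $f$ lies on the Hessian discriminant iff $H(f)\cap X_2$ does not consist of $10$ reduced points. *)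

theory Defs
  imports "HOL-Analysis.Analysis"
begin

text \<open>Variables x0,...,x3 are indexed by the type 4 (elements of_nat 0, ..., of_nat 3).
  A quadratic form in x0..x3 is represented by its symmetric coefficient matrix
  M :: complex^4^4, i.e. q(x) = sum_i sum_j M_ij x_i x_j; the space of quadratic forms
  (symmetric matrices) is the affine cone over P^9.  A cubic form is represented by its
  symmetric coefficient tensor T, i.e. f(x) = sum_i sum_j sum_k T i j k x_i x_j x_k.\<close>

definition qform :: "complex^4^4 \<Rightarrow> complex^4 \<Rightarrow> complex" where
  "qform M x = (\<Sum>i\<in>UNIV. \<Sum>j\<in>UNIV. M$i$j * x$i * x$j)"

definition cform :: "(4 \<Rightarrow> 4 \<Rightarrow> 4 \<Rightarrow> complex) \<Rightarrow> complex^4 \<Rightarrow> complex" where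
  "cform T x = (\<Sum>i\<in>UNIV. \<Sum>j\<in>UNIV. \<Sum>k\<in>UNIV. T i j k * x$i * x$j * x$k)"

text \<open>The partial derivative of a cubic form with symmetric tensor T with respect to x_l
  is the quadratic form with coefficient matrix 3 * T l.\<close>

definition dpartial :: "(4 \<Rightarrow> 4 \<Rightarrow> 4 \<Rightarrow> complex) \<Rightarrow> 4 \<Rightarrow> complex^4^4" where
  "dpartial T l = (\<chi> i j. 3 * T l i j)"

text \<open>Linear forms: lin m = x_m for m < 4, and lin 4 = x_4 := -x0-x1-x2-x3.\<close>

definition lin :: "nat \<Rightarrow> complex^4" where
  "lin m = (if m < 4 then axis (of_nat m) 1 else (\<chi> i. -1))"

definition ftensor :: "(nat \<Rightarrow> complex) \<Rightarrow> 4 \<Rightarrow> 4 \<Rightarrow> 4 \<Rightarrow> complex" where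
  "ftensor c i j k = (\<Sum>m<5. c m * lin m $ i * lin m $ j * lin m $ k)"


definition msc :: "complex \<Rightarrow> complex^4^4 \<Rightarrow> complex^4^4" where
  "msc a M = (\<chi> i j. a * M$i$j)"

definition partials_independent :: "(4 \<Rightarrow> 4 \<Rightarrow> 4 \<Rightarrow> complex) \<Rightarrow> bool" where
  "partials_independent T \<longleftrightarrow>
     (\<forall>w :: 4 \<Rightarrow> complex. (\<Sum>l\<in>UNIV. msc (w l) (dpartial T l)) = 0 \<longrightarrow> (\<forall>l. w l = 0))"

text \<open>Affine cone over H(f): the linear span of the partial derivatives.\<close>

definition Hcone :: "(4 \<Rightarrow> 4 \<Rightarrow> 4 \<Rightarrow> complex) \<Rightarrow> (complex^4^4) set" where
  "Hcone T = {(\<Sum>l\<in>UNIV. msc (w l) (dpartial T l)) | w. True}"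

text \<open>Affine cone over X_2: quadratic forms of rank at most 2.\<close>

definition X2cone :: "(complex^4^4) set" where
  "X2cone = {M. rank M \<le> 2}"

text \<open>Affine cone over a projective line in P^9: a 2-dimensional linear subspace.\<close>

definition is_line :: "(complex^4^4) set \<Rightarrow> bool" where
  "is_line L \<longleftrightarrow> (\<exists>P Q. (\<forall>a b. msc a P + msc b Q = 0 \<longrightarrow> a = 0 \<and> b = 0) \<and>
                          L = {msc a P + msc b Q | a b. True})"

end

theory Submission
  imports Defs
begin

definition outer :: "complex^4 \<Rightarrow> complex^4^4" where "outer v = (\<chi> i k. v$i * v$k)"
definition dot :: "complex^4 \<Rightarrow> complex^4 \<Rightarrow> complex" where "dot v w = (\<Sum>i\<in>UNIV. v$i * w$i)"
definition kk :: "nat \<Rightarrow> nat \<Rightarrow> nat" where "kk j r = (if r < j then r else Suc r)"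
definition V :: "nat \<Rightarrow> nat \<Rightarrow> complex^4" where "V j r = lin (kk j r)"
definition W :: "nat \<Rightarrow> nat \<Rightarrow> complex^4" where
  "W j r = (if j = 4 then axis (of_nat r) 1 else if kk j r = 4 then - axis (of_nat j) 1
            else axis (of_nat (kk j r)) 1 - axis (of_nat j) 1)"
definition S :: "nat \<Rightarrow> (nat \<Rightarrow> complex) \<Rightarrow> complex^4^4" where
  "S j u = (\<Sum>r<4. msc (u r) (outer (V j r)))"

lemma five: "j < 5 \<Longrightarrow> j = 0 \<or> j = 1 \<or> j = 2 \<or> j = 3 \<or> j = (4::nat)" by auto
lemma four: "j < 4 \<Longrightarrow> j = 0 \<or> j = 1 \<or> j = 2 \<or> j = (3::nat)" by auto

lemma dual: assumes "j < 5" "r < 4" "s < 4"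
  shows "dot (V j r) (W j s) = (if r = s then 1 else 0)"
  using five[OF assms(1)] four[OF assms(2)] four[OF assms(3)]
  by (elim disjE) (simp_all add: dot_def V_def W_def kk_def lin_def sum_4 axis_def)

lemma S_entry: "S j u $ i $ k = (\<Sum>r<4. u r * V j r $ i * V j r $ k)"
  by (simp add: S_def msc_def outer_def mult.assoc)

lemma dot_swap: "dot v w = dot w v" by (simp add: dot_def mult.commute)

lemma coef: assumes "j < 5" "s < 4"
  shows "(\<Sum>i\<in>UNIV. \<Sum>k\<in>UNIV. W j s $ i * S j u $ i $ k * W j s $ k) = u s"
proof -
  have "(\<Sum>i\<in>UNIV. \<Sum>k\<in>UNIV. W j s $ i * S j u $ i $ k * W j s $ k)
      = (\<Sum>r<4. u r * dot (V j r) (W j s) * dot (V j r) (W j s))"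
  proof -
    have "(\<Sum>i\<in>UNIV. \<Sum>k\<in>UNIV. W j s $ i * S j u $ i $ k * W j s $ k)
      = (\<Sum>i\<in>UNIV. \<Sum>r<4. \<Sum>k\<in>UNIV. W j s $ i * (u r * V j r $ i * V j r $ k) * W j s $ k)"
      unfolding S_entry sum_distrib_left sum_distrib_right
      by (rule sum.cong[OF refl], rule sum.swap)
    also have "\<dots> = (\<Sum>r<4. \<Sum>i\<in>UNIV. \<Sum>k\<in>UNIV. W j s $ i * (u r * V j r $ i * V j r $ k) * W j s $ k)"
      by (rule sum.swap)
    also have "\<dots> = (\<Sum>r<4. u r * dot (V j r) (W j s) * dot (V j r) (W j s))"
      by (rule sum.cong[OF refl]) (simp add: dot_def sum_product sum_distrib_left algebra_simps)
    finally show ?thesis .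
  qed
  also have "\<dots> = (\<Sum>r<4. if r = s then u r else 0)"
    by (rule sum.cong) (auto simp: dual assms)
  also have "\<dots> = u s" using assms by simp
  finally show ?thesis .
qed

lemma S_unique: assumes "j < 5" "S j u = S j u'" "s < 4" shows "u s = u' s"
  using coef[OF assms(1,3), of u] coef[OF assms(1,3), of u'] assms(2) by simp

lemma dot_sum: "dot (sum g A) w = (\<Sum>a\<in>A. dot (g a) w)"
  by (simp add: dot_def sum_distrib_right) (rule sum.swap)
lemma dot_scale: "dot (c *s v) w = c * dot v w"
  by (simp add: dot_def sum_distrib_left mult.assoc)

lemma V_inj: "j < 5 \<Longrightarrow> inj_on (V j) {..<4}"
  unfolding inj_on_def
proof clarsimp
  fix r s assume "j < 5" "r < (4::nat)" "s < (4::nat)" "V j r = V j s"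
  then have "dot (V j r) (W j s) = dot (V j s) (W j s)" by simp
  then show "r = s" using dual \<open>j<5\<close> \<open>r<4\<close> \<open>s<4\<close> by (simp split: if_splits)
qed

lemma row_S: "row i (S j u) = (\<Sum>r<4. (u r * V j r $ i) *s V j r)"
  by (simp add: row_def vec_eq_iff S_entry mult.assoc)

lemma V_in_span_rows: assumes "j < 5" "s < 4" "u s \<noteq> 0"
  shows "V j s \<in> vec.span (rows (S j u))"
proof -
  have eq: "(\<Sum>i\<in>UNIV. (W j s $ i / u s) *s row i (S j u)) = V j s"
  unfolding vec_eq_iff proof (rule allI)
    fix k
    have "(\<Sum>i\<in>UNIV. (W j s $ i / u s) *s row i (S j u)) $ k
        = (\<Sum>i\<in>UNIV. \<Sum>r<4. (W j s $ i / u s) * (u r * V j r $ i * V j r $ k))"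
      by (simp add: row_def S_entry sum_distrib_left)
    also have "\<dots> = (\<Sum>r<4. \<Sum>i\<in>UNIV. (W j s $ i / u s) * (u r * V j r $ i * V j r $ k))"
      by (rule sum.swap)
    also have "\<dots> = (\<Sum>r<4. (u r / u s) * V j r $ k * dot (V j r) (W j s))"
      by (rule sum.cong[OF refl]) (simp add: dot_def sum_distrib_left sum_distrib_right algebra_simps)
    also have "\<dots> = (\<Sum>r<4. if r = s then V j s $ k else 0)"
      by (rule sum.cong[OF refl]) (simp add: dual assms)
    also have "\<dots> = V j s $ k" using assms by simp
    finally show "(\<Sum>i\<in>UNIV. (W j s $ i / u s) *s row i (S j u)) $ k = V j s $ k" .
  qed
  have "(\<Sum>i\<in>UNIV. (W j s $ i / u s) *s row i (S j u)) \<in> vec.span (rows (S j u))"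
    by (intro vec.span_sum vec.span_scale vec.span_base) (auto simp: rows_def)
  then show ?thesis using eq by simp
qed

lemma V_indep: assumes "j < 5" "Z \<subseteq> {..<4}" shows "vec.independent (V j ` Z)"
proof (rule vec.independent_if_scalars_zero)
  show "finite (V j ` Z)" using assms(2) finite_subset by blast
  fix f x assume h: "(\<Sum>x\<in>V j ` Z. f x *s x) = 0" and x: "x \<in> V j ` Z"
  then obtain s where s: "s \<in> Z" "x = V j s" by auto
  have inj: "inj_on (V j) Z" using V_inj[OF assms(1)] assms(2) inj_on_subset by blast
  have "0 = dot (\<Sum>x\<in>V j ` Z. f x *s x) (W j s)" using h by (simp add: dot_def)
  also have "\<dots> = (\<Sum>r\<in>Z. f (V j r) * dot (V j r) (W j s))"
    by (simp add: dot_sum dot_scale sum.reindex[OF inj])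
  also have "\<dots> = (\<Sum>r\<in>Z. if r = s then f (V j s) else 0)"
  proof (rule sum.cong[OF refl])
    fix r assume "r \<in> Z"
    then have "r < 4" "s < 4" using assms(2) s(1) by auto
    then show "f (V j r) * dot (V j r) (W j s) = (if r = s then f (V j s) else 0)"
      using dual[OF assms(1)] by simp
  qed
  also have "\<dots> = f x" using s assms(2) finite_subset[OF assms(2)] by simp
  finally show "f x = 0" by simp
qed

lemma rank_S: assumes "j < 5" shows "rank (S j u) = card {r. r < 4 \<and> u r \<noteq> 0}"
proof -
  define Z where "Z = {r. r < 4 \<and> u r \<noteq> 0}"
  have Zsub: "Z \<subseteq> {..<4}" by (auto simp: Z_def)
  have fin: "finite Z" using Zsub finite_subset by blast
  have inj: "inj_on (V j) Z" using V_inj[OF assms(1)] Zsub inj_on_subset by blast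
  have "rows (S j u) \<subseteq> vec.span (V j ` Z)"
  proof
    fix x assume "x \<in> rows (S j u)"
    then obtain i where x: "x = row i (S j u)" by (auto simp: rows_def)
    show "x \<in> vec.span (V j ` Z)" unfolding x row_S
    proof (rule vec.span_sum)
      fix r assume "r \<in> {..<4::nat}"
      show "(u r * V j r $ i) *s V j r \<in> vec.span (V j ` Z)"
      proof (cases "u r = 0")
        case True then show ?thesis by (simp add: vec.span_zero)
      next
        case False then show ?thesis using \<open>r \<in> {..<4}\<close>
          by (intro vec.span_scale vec.span_base) (auto simp: Z_def)
      qed
    qed
  qed
  then have "vec.dim (rows (S j u)) \<le> card (V j ` Z)"
    using vec.dim_le_card fin by blast
  then have le: "rank (S j u) \<le> card Z"
    by (simp add: row_rank_def_gen card_image[OF inj])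
  have "V j ` Z \<subseteq> vec.span (rows (S j u))"
    using V_in_span_rows[OF assms(1)] by (auto simp: Z_def)
  then have "card (V j ` Z) \<le> vec.dim (vec.span (rows (S j u)))"
    using vec.independent_card_le_dim V_indep[OF assms(1) Zsub] by blast
  then have ge: "card Z \<le> rank (S j u)"
    by (simp add: row_rank_def_gen card_image[OF inj])
  show ?thesis using le ge Z_def by simp
qed

lemma sum_split5: "j < 5 \<Longrightarrow> (\<Sum>m<5. g m) = g j + (\<Sum>r<4. g (kk j r))"
  by (drule five) (elim disjE; simp add: kk_def eval_nat_numeral ac_simps)

lemma S_cong: "(\<And>r. r < 4 \<Longrightarrow> u r = u' r) \<Longrightarrow> S j u = S j u'"
  unfolding S_def by (rule sum.cong) auto

lemma S_zero: "S j (\<lambda>_. 0) = 0"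
  by (simp add: S_def msc_def vec_eq_iff)

definition tt :: "(4 \<Rightarrow> complex) \<Rightarrow> nat \<Rightarrow> complex" where
  "tt w m = (\<Sum>l\<in>UNIV. w l * lin m $ l)"

lemma partial_sum:
  "(\<Sum>l\<in>UNIV. msc (w l) (dpartial (ftensor c) l)) = (\<Sum>m<5. msc (3 * c m * tt w m) (outer (lin m)))"
proof -
  have "\<And>i k. (\<Sum>l\<in>UNIV. w l * (3 * (\<Sum>m<5. c m * lin m $ l * lin m $ i * lin m $ k)))
      = (\<Sum>m<5. 3 * c m * (\<Sum>l\<in>UNIV. w l * lin m $ l) * (lin m $ i * lin m $ k))"
    by (simp add: sum_distrib_left sum_distrib_right algebra_simps) (rule sum.swap)
  then show ?thesis
    by (simp add: vec_eq_iff msc_def dpartial_def ftensor_def outer_def tt_def)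
qed

lemma partial_S: assumes "j < 5" "c j = 0"
  shows "(\<Sum>l\<in>UNIV. msc (w l) (dpartial (ftensor c) l)) = S j (\<lambda>r. 3 * c (kk j r) * tt w (kk j r))"
  unfolding partial_sum sum_split5[OF assms(1)] S_def V_def
  using assms(2) by (simp add: msc_def vec_eq_iff)

lemma tt_zero: assumes "j < 5" "\<And>r. r < 4 \<Longrightarrow> tt w (kk j r) = 0" shows "w l = 0"
proof -
  have h: "tt w (kk j 0) = 0" "tt w (kk j 1) = 0" "tt w (kk j 2) = 0" "tt w (kk j 3) = 0"
    using assms(2) by auto
  have "l = 1 \<or> l = 2 \<or> l = 3 \<or> l = 4" using exhaust_4 by auto
  then show ?thesis using five[OF assms(1)] h
    by (elim disjE) (simp_all add: tt_def kk_def lin_def sum_4 axis_def)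
qed

definition pa :: "nat \<Rightarrow> nat" where "pa i = [0,0,0,1,1,2] ! i"
definition pb :: "nat \<Rightarrow> nat" where "pb i = [1,2,3,2,3,3] ! i"

lemma six: "i < 6 \<Longrightarrow> i = 0 \<or> i = 1 \<or> i = 2 \<or> i = 3 \<or> i = 4 \<or> i = (5::nat)" by auto

lemma pab: "i < 6 \<Longrightarrow> pa i < 4 \<and> pb i < 4 \<and> pa i \<noteq> pb i"
  by (drule six) (auto simp: pa_def pb_def)

lemma pab_inj: "i < 6 \<Longrightarrow> i' < 6 \<Longrightarrow> pa i \<in> {pa i', pb i'} \<Longrightarrow> pb i \<in> {pa i', pb i'} \<Longrightarrow> i = i'"
  by (drule six, drule six) (auto simp: pa_def pb_def)

lemma comb_aux: "\<forall>Z\<in>Pow {0,1,2,3::nat}. card Z \<le> 2 \<longrightarrow> (\<exists>i\<in>{0,1,2,3,4,5}. Z \<subseteq> {pa i, pb i})"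
  by (simp add: Pow_insert pa_def pb_def insert_commute)

lemma comb: assumes "Z \<subseteq> {..<4::nat}" "card Z \<le> 2" shows "\<exists>i<6. Z \<subseteq> {pa i, pb i}"
proof -
  have "{..<4::nat} = {0,1,2,3}" by auto
  then have "Z \<in> Pow {0,1,2,3}" using assms(1) by auto
  then obtain i where "i \<in> {0,1,2,3,4,5::nat}" "Z \<subseteq> {pa i, pb i}" using comb_aux assms(2) by blast
  then show ?thesis by (intro exI[of _ i]) auto
qed

lemma msc_zero[simp]: "msc 0 M = 0" by (simp add: msc_def vec_eq_iff)

lemma S_two: assumes "p < 4" "q < 4" "p \<noteq> q"
  shows "msc a (outer (V j p)) + msc b (outer (V j q)) = S j (\<lambda>r. if r = p then a else if r = q then b else 0)"
proof -
  have "S j (\<lambda>r. if r = p then a else if r = q then b else 0)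
      = (\<Sum>r<4. (if r = p then msc a (outer (V j r)) else 0) + (if r = q then msc b (outer (V j r)) else 0))"
    unfolding S_def by (rule sum.cong) (use assms in auto)
  also have "\<dots> = msc a (outer (V j p)) + msc b (outer (V j q))"
    using assms by (simp add: sum.distrib)
  finally show ?thesis by simp
qed

lemma Hcone_eq: assumes "j < 5" "c j = 0" "\<forall>m<5. m \<noteq> j \<longrightarrow> c m \<noteq> 0"
  shows "Hcone (ftensor c) = range (S j)"
proof
  show "Hcone (ftensor c) \<subseteq> range (S j)"
    unfolding Hcone_def using partial_S[of j c, OF assms(1,2)] by auto
  show "range (S j) \<subseteq> Hcone (ftensor c)"
  proof clarify
    fix u
    define w where "w l = (\<Sum>s<4. (u s / (3 * c (kk j s))) * W j s $ l)" for l
    have "tt w (kk j r) = u r / (3 * c (kk j r))" if r: "r < 4" for r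
    proof -
      have "tt w (kk j r) = (\<Sum>l\<in>UNIV. \<Sum>s<4. (u s / (3 * c (kk j s))) * W j s $ l * V j r $ l)"
        by (simp add: tt_def w_def V_def sum_distrib_right)
      also have "\<dots> = (\<Sum>s<4. (u s / (3 * c (kk j s))) * dot (V j r) (W j s))"
        by (subst sum.swap) (simp add: dot_def sum_distrib_left algebra_simps)
      also have "\<dots> = (\<Sum>s<4. if s = r then u r / (3 * c (kk j r)) else 0)"
        by (rule sum.cong[OF refl]) (use r assms(1) in \<open>auto simp: dual\<close>)
      also have "\<dots> = u r / (3 * c (kk j r))" using r by simp
      finally show ?thesis .
    qed
    moreover have "c (kk j r) \<noteq> 0" if "r < 4" for r
      using assms(3) that by (auto simp: kk_def)
    ultimately have "S j (\<lambda>r. 3 * c (kk j r) * tt w (kk j r)) = S j u"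
      by (intro S_cong) simp
    then show "S j u \<in> Hcone (ftensor c)"
      unfolding Hcone_def using partial_S[of j c w, OF assms(1,2)] by (auto intro!: exI[of _ w])
  qed
qed

definition Ls :: "nat \<Rightarrow> nat \<Rightarrow> (complex^4^4) set" where
  "Ls j i = {msc a (outer (V j (pa i))) + msc b (outer (V j (pb i))) | a b. True}"

lemma Ls_S: assumes "i < 6"
  shows "Ls j i = {S j u | u. \<forall>r<4. u r \<noteq> 0 \<longrightarrow> r = pa i \<or> r = pb i}"
proof -
  note p = pab[OF assms]
  show ?thesis
  proof (intro set_eqI iffI)
    fix M assume "M \<in> Ls j i"
    then obtain a b where "M = msc a (outer (V j (pa i))) + msc b (outer (V j (pb i)))"
      by (auto simp: Ls_def)
    then have "M = S j (\<lambda>r. if r = pa i then a else if r = pb i then b else 0)"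
      using S_two[of "pa i" "pb i" a j b] p by auto
    then show "M \<in> {S j u | u. \<forall>r<4. u r \<noteq> 0 \<longrightarrow> r = pa i \<or> r = pb i}"
      unfolding mem_Collect_eq
      by (intro exI[of _ "\<lambda>r. if r = pa i then a else if r = pb i then b else 0"]) auto
  next
    fix M assume "M \<in> {S j u | u. \<forall>r<4. u r \<noteq> 0 \<longrightarrow> r = pa i \<or> r = pb i}"
    then obtain u where M: "M = S j u" and u: "\<forall>r<4. u r \<noteq> 0 \<longrightarrow> r = pa i \<or> r = pb i" by auto
    have "S j u = S j (\<lambda>r. if r = pa i then u (pa i) else if r = pb i then u (pb i) else 0)"
      by (rule S_cong) (use u in auto)
    then have "M = msc (u (pa i)) (outer (V j (pa i))) + msc (u (pb i)) (outer (V j (pb i)))"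
      using M S_two[of "pa i" "pb i" "u (pa i)" j "u (pb i)"] p by simp
    then show "M \<in> Ls j i" by (auto simp: Ls_def)
  qed
qed

lemma Ls_line: assumes "j < 5" "i < 6" shows "is_line (Ls j i)"
  unfolding is_line_def
proof (intro exI conjI allI impI)
  note p = pab[OF assms(2)]
  fix a b assume h: "msc a (outer (V j (pa i))) + msc b (outer (V j (pb i))) = 0"
  then have "S j (\<lambda>r. if r = pa i then a else if r = pb i then b else 0) = S j (\<lambda>_. 0)"
    using S_two[of "pa i" "pb i" a j b] p S_zero by simp
  note e = this
  show "a = 0" using S_unique[OF assms(1) e, of "pa i"] p by simp
  show "b = 0" using S_unique[OF assms(1) e, of "pb i"] p by simp
qed (simp add: Ls_def)

lemma in_other: assumes "j < 5" "i < 6" "i' < 6" "Ls j i = Ls j i'" "p = pa i \<or> p = pb i"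
  shows "p \<in> {pa i', pb i'}"
proof -
  note pi = pab[OF assms(2)]
  have "p < 4" using pi assms(5) by auto
  have "outer (V j p) \<in> Ls j i" unfolding Ls_def using assms(5)
  proof (elim disjE)
    assume "p = pa i"
    then have "outer (V j p) = msc 1 (outer (V j (pa i))) + msc 0 (outer (V j (pb i)))"
      by (simp add: msc_def vec_eq_iff)
    then show "outer (V j p) \<in> {msc a (outer (V j (pa i))) + msc b (outer (V j (pb i))) |a b. True}" by blast
  next
    assume "p = pb i"
    then have "outer (V j p) = msc 0 (outer (V j (pa i))) + msc 1 (outer (V j (pb i)))"
      by (simp add: msc_def vec_eq_iff)
    then show "outer (V j p) \<in> {msc a (outer (V j (pa i))) + msc b (outer (V j (pb i))) |a b. True}" by blast
  qed
  then have "outer (V j p) \<in> Ls j i'" using assms(4) by simp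
  then obtain u where u: "outer (V j p) = S j u" "\<forall>r<4. u r \<noteq> 0 \<longrightarrow> r = pa i' \<or> r = pb i'"
    using Ls_S[OF assms(3)] by auto
  obtain q :: nat where q: "q < 4" "q \<noteq> p"
  proof (cases "p = 0")
    case True then show ?thesis using that[of 1] by simp
  next
    case False then show ?thesis using that[of 0] by simp
  qed
  have "outer (V j p) = msc 1 (outer (V j p)) + msc 0 (outer (V j q))" by (simp add: msc_def vec_eq_iff)
  also have "\<dots> = S j (\<lambda>r. if r = p then 1 else if r = q then 0 else 0)"
    using S_two[of p q 1 j 0] q \<open>p<4\<close> by simp
  finally have "S j (\<lambda>r. if r = p then 1 else if r = q then 0 else 0) = S j u" using u(1) by simp
  from S_unique[OF assms(1) this \<open>p<4\<close>] have "u p = 1" by simp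
  then show ?thesis using u(2) \<open>p<4\<close> by auto
qed

theorem mainTheorem4:
  fixes c :: "nat \<Rightarrow> complex" and j :: nat
  assumes "j < 5" and "c j = 0" and "\<forall>m<5. m \<noteq> j \<longrightarrow> c m \<noteq> 0"
  shows "partials_independent (ftensor c) \<and>
         (\<exists>L :: nat \<Rightarrow> (complex^4^4) set.
            (\<forall>i<6. is_line (L i)) \<and> inj_on L {..<6} \<and>
            Hcone (ftensor c) \<inter> X2cone = (\<Union>i<6. L i))"
proof (intro conjI exI[of _ "Ls j"])
  have cnz: "c (kk j r) \<noteq> 0" if "r < 4" for r
    using assms(3) that by (auto simp: kk_def)
  show "partials_independent (ftensor c)"
    unfolding partials_independent_def
  proof (intro allI impI)
    fix w :: "4 \<Rightarrow> complex" and l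
    assume "(\<Sum>l\<in>UNIV. msc (w l) (dpartial (ftensor c) l)) = 0"
    then have e: "S j (\<lambda>r. 3 * c (kk j r) * tt w (kk j r)) = S j (\<lambda>_. 0)"
      using partial_S[of j c w, OF assms(1,2)] S_zero by simp
    have "tt w (kk j r) = 0" if "r < 4" for r
      using S_unique[OF assms(1) e that] cnz[OF that] by simp
    then show "w l = 0" using tt_zero[OF assms(1)] by blast
  qed
  show "\<forall>i<6. is_line (Ls j i)" using Ls_line[OF assms(1)] by blast
  show "inj_on (Ls j) {..<6}"
    unfolding inj_on_def
    by (metis pab_inj in_other[OF assms(1)] lessThan_iff)
  show "Hcone (ftensor c) \<inter> X2cone = (\<Union>i<6. Ls j i)"
  proof (intro set_eqI iffI)
    fix M assume "M \<in> Hcone (ftensor c) \<inter> X2cone"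
    then obtain u where M: "M = S j u" and r: "rank (S j u) \<le> 2"
      using Hcone_eq[OF assms] by (auto simp: X2cone_def)
    then have "card {r. r < 4 \<and> u r \<noteq> 0} \<le> 2" using rank_S[OF assms(1)] by simp
    then obtain i where i: "i < 6" "{r. r < 4 \<and> u r \<noteq> 0} \<subseteq> {pa i, pb i}"
      using comb[of "{r. r < 4 \<and> u r \<noteq> 0}"] by auto
    then have "M \<in> Ls j i" unfolding Ls_S[OF i(1)] M by auto
    then show "M \<in> (\<Union>i<6. Ls j i)" using i(1) by auto
  next
    fix M assume "M \<in> (\<Union>i<6. Ls j i)"
    then obtain i where i: "i < 6" "M \<in> Ls j i" by auto
    then obtain u where M: "M = S j u" and u: "\<forall>r<4. u r \<noteq> 0 \<longrightarrow> r = pa i \<or> r = pb i"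
      using Ls_S[OF i(1)] by auto
    have "{r. r < 4 \<and> u r \<noteq> 0} \<subseteq> {pa i, pb i}" using u by auto
    then have "card {r. r < 4 \<and> u r \<noteq> 0} \<le> card {pa i, pb i}" by (intro card_mono) auto
    also have "\<dots> \<le> 2" by (simp add: card_insert_le_m1)
    finally have "rank M \<le> 2" using rank_S[OF assms(1)] M by simp
    then show "M \<in> Hcone (ftensor c) \<inter> X2cone"
      using Hcone_eq[OF assms] M by (auto simp: X2cone_def)
  qed
qed

end
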